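(* Let $K\subset\mathbb{R}^2$ be the infinitely generated self-similar set defined in the context. Then $K$ has positive two-dimensional Lebesgue measure and empty interior. Moreover, for Lebesgue almost every $y\in[0,1]$ the horizontal fibre $K_y:=\{x\in\mathbb{R}:(x,y)\in K\}$ contains a nontrivial interval.
   Context: For $k\ge 0$ and $n\ge 1$ let $t_{k,n}:=\frac{1}{2^k n}$. Define the similarities of $\mathbb{R}^2$: $U(x,y)=\left(\frac{x}{2},\frac{y+1}{2}\right)$, $D_0(x,y)=\left(\frac{x}{2},\frac{y}{2}\right)$, and $D_{k,n}(x,y)=\left(\frac{x+t_{k,n}}{2},\frac{y}{2}\right)$ for $k\ge0,n\ge1$. Let $\Phi$ be this countable family. $K$ is the unique non-empty compact set $K\subset\mathbb{R}^2$ satisfying $K=U(K)\cup D_0(K)\cup\bigcup_{k\ge0,n\ge1}D_{k,n}(K)$. *)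

theory Defs
  imports "HOL-Analysis.Analysis"
begin

definition tkn :: "nat \<Rightarrow> nat \<Rightarrow> real" where
  "tkn k n = 1 / (2 ^ k * real n)"

definition mapU :: "real \<times> real \<Rightarrow> real \<times> real" where
  "mapU p = (fst p / 2, (snd p + 1) / 2)"

definition mapD0 :: "real \<times> real \<Rightarrow> real \<times> real" where
  "mapD0 p = (fst p / 2, snd p / 2)"

definition mapD :: "nat \<Rightarrow> nat \<Rightarrow> real \<times> real \<Rightarrow> real \<times> real" where
  "mapD k n p = ((fst p + tkn k n) / 2, snd p / 2)"

definition hutch :: "(real \<times> real) set \<Rightarrow> (real \<times> real) set" where
  "hutch S = mapU ` S \<union> mapD0 ` S \<union> (\<Union>k. \<Union>n\<in>{1..}. mapD k n ` S)"

definition Kset :: "(real \<times> real) set" where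
  "Kset = (THE K. compact K \<and> K \<noteq> {} \<and> K = hutch K)"

end

theory Submission
  imports Defs
begin


definition Ts :: "real set" where "Ts = insert 0 ((\<lambda>m::nat. 1 / real (Suc m)) ` UNIV)"
definition Iset :: "(real \<times> real) set" where "Iset = insert (1,0) ({0} \<times> Ts)"
definition G :: "real \<times> real \<Rightarrow> real \<times> real \<Rightarrow> real \<times> real" where
  "G q i = ((fst q + snd i) / 2, (snd q + fst i) / 2)"

lemma tkn_Ts: "n \<ge> 1 \<Longrightarrow> tkn k n \<in> Ts"
proof -
  assume n: "n \<ge> 1"
  have "2 ^ k * n \<ge> 1" using n by (simp add: Suc_le_eq)
  then have "tkn k n = 1 / real (Suc (2^k*n - 1))"
    unfolding tkn_def by (simp add: of_nat_diff)
  then show ?thesis unfolding Ts_def by blast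
qed

lemma hutch_iff: "p \<in> hutch S \<longleftrightarrow> (\<exists>q\<in>S. \<exists>i\<in>Iset. p = G q i)"
proof
  assume "p \<in> hutch S"
  then consider "p \<in> mapU ` S" | "p \<in> mapD0 ` S" | k n where "n \<ge> 1" "p \<in> mapD k n ` S"
    unfolding hutch_def by blast
  then show "\<exists>q\<in>S. \<exists>i\<in>Iset. p = G q i"
  proof cases
    case 1 then show ?thesis
      by (auto simp: mapU_def G_def Iset_def)
  next
    case 2 then show ?thesis
      by (auto simp: mapD0_def G_def Iset_def Ts_def)
  next
    case 3
    then obtain q where "q \<in> S" "p = mapD k n q" by auto
    then have "p = G q (0, tkn k n)" by (simp add: mapD_def G_def)
    moreover have "(0, tkn k n) \<in> Iset" using tkn_Ts[OF 3(1)] by (simp add: Iset_def)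
    ultimately show ?thesis using \<open>q \<in> S\<close> by blast
  qed
next
  assume "\<exists>q\<in>S. \<exists>i\<in>Iset. p = G q i"
  then obtain q i where q: "q \<in> S" and i: "i \<in> Iset" and p: "p = G q i" by blast
  from i consider "i = (1,0)" | "i = (0,0)" | m where "i = (0, 1 / real (Suc m))"
    unfolding Iset_def Ts_def by auto
  then show "p \<in> hutch S"
  proof cases
    case 1
    then have "p = mapU q" using p by (simp add: mapU_def G_def)
    then show ?thesis using q unfolding hutch_def by blast
  next
    case 2
    then have "p = mapD0 q" using p by (simp add: mapD0_def G_def)
    then show ?thesis using q unfolding hutch_def by blast
  next
    case 3
    then have "p = mapD 0 (Suc m) q" using p by (simp add: mapD_def G_def tkn_def)
    moreover have "Suc m \<in> {1..}" by simp
    ultimately show ?thesis using q unfolding hutch_def by blast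
  qed
qed

lemma hutch_img: "hutch S = (\<lambda>z. G (fst z) (snd z)) ` (S \<times> Iset)"
proof (rule set_eqI)
  fix p show "p \<in> hutch S \<longleftrightarrow> p \<in> (\<lambda>z. G (fst z) (snd z)) ` (S \<times> Iset)"
    unfolding hutch_iff image_iff by auto
qed

lemma compact_Ts: "compact Ts"
proof -
  have "(\<lambda>m::nat. 1 / real (Suc m)) \<longlonglongrightarrow> 0"
    using LIMSEQ_Suc[OF lim_inverse_n'] by (simp add: inverse_eq_divide)
  then show ?thesis unfolding Ts_def by (rule compact_sequence_with_limit)
qed

lemma compact_Iset: "compact Iset"
  unfolding Iset_def by (intro compact_insert compact_Times compact_Ts) auto

lemma Iset_bounds: "i \<in> Iset \<Longrightarrow> 0 \<le> fst i \<and> fst i \<le> 1 \<and> 0 \<le> snd i \<and> snd i \<le> 1"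
  unfolding Iset_def Ts_def by auto

lemma Iset_cases: "i \<in> Iset \<Longrightarrow> (fst i = 0 \<or> fst i = 1) \<and> (fst i = 1 \<longrightarrow> snd i = 0)"
  unfolding Iset_def Ts_def by auto

lemma continuous_G: "continuous_on X (\<lambda>z. G (fst z) (snd z))"
  unfolding G_def by (intro continuous_intros) auto

lemma compact_hutch: "compact S \<Longrightarrow> compact (hutch S)"
  unfolding hutch_img
  by (intro compact_continuous_image continuous_G compact_Times compact_Iset)

lemma hutch_mono: "S \<subseteq> S' \<Longrightarrow> hutch S \<subseteq> hutch S'"
  unfolding subset_iff hutch_iff by blast



definition code :: "(nat \<Rightarrow> real \<times> real) \<Rightarrow> real \<times> real" where
  "code s = ((\<Sum>i. snd (s i) / 2 ^ Suc i), (\<Sum>i. fst (s i) / 2 ^ Suc i))"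

definition Cset :: "(real \<times> real) set" where "Cset = code ` {s. \<forall>i. s i \<in> Iset}"

definition pt :: "nat \<Rightarrow> (nat \<Rightarrow> real \<times> real) \<Rightarrow> real \<times> real \<Rightarrow> real \<times> real" where
  "pt n s q = ((\<Sum>i<n. snd (s i) / 2 ^ Suc i) + fst q / 2 ^ n,
               (\<Sum>i<n. fst (s i) / 2 ^ Suc i) + snd q / 2 ^ n)"

lemma summ01:
  fixes f :: "nat \<Rightarrow> real"
  assumes "\<And>i. 0 \<le> f i" "\<And>i. f i \<le> 1"
  shows "summable (\<lambda>i. f i / 2 ^ Suc i)"
proof (rule summable_comparison_test[of _ "\<lambda>i. (1/2::real) ^ i"])
  show "\<exists>N. \<forall>n\<ge>N. norm (f n / 2 ^ Suc n) \<le> (1 / 2) ^ n"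
  proof (intro exI allI impI)
    fix n :: nat
    have "norm (f n / 2 ^ Suc n) = f n / 2 ^ Suc n" using assms(1)[of n] by simp
    also have "\<dots> \<le> 1 / 2 ^ Suc n" using assms(2)[of n] by (simp add: divide_right_mono)
    also have "\<dots> = (1/2) ^ n / 2" by (simp add: power_one_over)
    also have "\<dots> \<le> (1/2) ^ n" by simp
    finally show "norm (f n / 2 ^ Suc n) \<le> (1 / 2) ^ n" .
  qed
  show "summable (\<lambda>i. (1/2::real) ^ i)" by (rule summable_geometric) simp
qed

lemma summ_fst: "\<forall>i. s i \<in> Iset \<Longrightarrow> summable (\<lambda>i. fst (s i) / 2 ^ Suc i)"
  by (rule summ01) (use Iset_bounds in auto)
lemma summ_snd: "\<forall>i. s i \<in> Iset \<Longrightarrow> summable (\<lambda>i. snd (s i) / 2 ^ Suc i)"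
  by (rule summ01) (use Iset_bounds in auto)

lemma pt_0[simp]: "pt 0 s q = q" by (simp add: pt_def)

lemma pt_Suc: "pt (Suc n) s q = pt n s (G q (s n))"
  by (simp add: pt_def G_def field_simps)

lemma pt_lim:
  assumes s: "\<forall>i. s i \<in> Iset" and qs: "\<And>n. qs n \<in> K" and K: "bounded K"
  shows "(\<lambda>n. pt n s (qs n)) \<longlonglongrightarrow> code s"
proof -
  obtain B where B: "B > 0" "\<And>x. x \<in> K \<Longrightarrow> norm x \<le> B" using K bounded_pos by blast
  have B0: "(\<lambda>n. B * (1/2) ^ n :: real) \<longlonglongrightarrow> 0"
    by (intro tendsto_mult_right_zero LIMSEQ_realpow_zero) auto
  have z1: "(\<lambda>n. fst (qs n) / 2 ^ n) \<longlonglongrightarrow> 0"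
  proof (rule Lim_null_comparison[OF _ B0], rule always_eventually, rule allI)
    fix n
    have "\<bar>fst (qs n)\<bar> \<le> B" using B(2)[OF qs[of n]] norm_fst_le[of "fst (qs n)" "snd (qs n)"] by simp
    then show "norm (fst (qs n) / 2 ^ n) \<le> B * (1/2) ^ n"
      by (simp add: power_divide divide_right_mono)
  qed
  have z2: "(\<lambda>n. snd (qs n) / 2 ^ n) \<longlonglongrightarrow> 0"
  proof (rule Lim_null_comparison[OF _ B0], rule always_eventually, rule allI)
    fix n
    have "\<bar>snd (qs n)\<bar> \<le> B" using B(2)[OF qs[of n]] norm_snd_le[of "snd (qs n)" "fst (qs n)"] by simp
    then show "norm (snd (qs n) / 2 ^ n) \<le> B * (1/2) ^ n"
      by (simp add: power_divide divide_right_mono)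
  qed
  have a: "(\<lambda>n. (\<Sum>i<n. snd (s i) / 2 ^ Suc i) + fst (qs n) / 2 ^ n) \<longlonglongrightarrow> (\<Sum>i. snd (s i) / 2 ^ Suc i) + 0"
    by (intro tendsto_add summable_LIMSEQ summ_snd s z1)
  have b: "(\<lambda>n. (\<Sum>i<n. fst (s i) / 2 ^ Suc i) + snd (qs n) / 2 ^ n) \<longlonglongrightarrow> (\<Sum>i. fst (s i) / 2 ^ Suc i) + 0"
    by (intro tendsto_add summable_LIMSEQ summ_fst s z2)
  show ?thesis using tendsto_Pair[OF a b] unfolding pt_def code_def by simp
qed

lemma C_sub:
  assumes K: "closed K" "hutch K \<subseteq> K" "q \<in> K" and s: "\<forall>i. s i \<in> Iset"
  shows "code s \<in> K"
proof -
  have "\<forall>q\<in>K. pt n s q \<in> K" for n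
  proof (induction n)
    case 0 then show ?case by simp
  next
    case (Suc n)
    show ?case
    proof
      fix q assume "q \<in> K"
      then have "G q (s n) \<in> hutch K" using s hutch_iff by blast
      then have "G q (s n) \<in> K" using K(2) by blast
      then show "pt (Suc n) s q \<in> K" using Suc by (simp add: pt_Suc)
    qed
  qed
  then have A: "\<And>n. pt n s q \<in> K" using K(3) by blast
  have "(\<lambda>n. pt n s ((\<lambda>_. q) n)) \<longlonglongrightarrow> code s"
    by (rule pt_lim[OF s, of _ "{q}"]) auto
  then show ?thesis by (rule closed_sequentially[OF K(1) A])
qed

lemma sub_C:
  assumes K: "bounded K" "K \<subseteq> hutch K"
  shows "K \<subseteq> Cset"
proof
  fix p assume p: "p \<in> K"
  have "\<forall>q\<in>K. \<exists>z. fst z \<in> K \<and> snd z \<in> Iset \<and> q = G (fst z) (snd z)"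
  proof
    fix q assume "q \<in> K"
    then have "q \<in> hutch K" using K(2) by blast
    then obtain q' i where "q' \<in> K" "i \<in> Iset" "q = G q' i" unfolding hutch_iff by blast
    then show "\<exists>z. fst z \<in> K \<and> snd z \<in> Iset \<and> q = G (fst z) (snd z)"
      by (intro exI[of _ "(q', i)"]) simp
  qed
  from bchoice[OF this] obtain nx where nx0: "\<forall>q\<in>K. fst (nx q) \<in> K \<and> snd (nx q) \<in> Iset \<and> q = G (fst (nx q)) (snd (nx q))"
    by blast
  then have nx: "\<And>q. q \<in> K \<Longrightarrow> fst (nx q) \<in> K \<and> snd (nx q) \<in> Iset \<and> q = G (fst (nx q)) (snd (nx q))"
    by blast
  define qs where "qs = (\<lambda>n. ((fst \<circ> nx) ^^ n) p)"
  define s where "s = (\<lambda>n. snd (nx (qs n)))"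
  have qsS: "qs (Suc n) = fst (nx (qs n))" for n by (simp add: qs_def)
  have qsK: "qs n \<in> K" for n
  proof (induction n)
    case 0 then show ?case using p by (simp add: qs_def)
  next
    case (Suc n) then show ?case using nx[of "qs n"] by (simp add: qsS)
  qed
  have sI: "\<forall>n. s n \<in> Iset" using nx qsK unfolding s_def by blast
  have qsG: "qs n = G (qs (Suc n)) (s n)" for n using nx[OF qsK[of n]] by (simp add: qsS s_def)
  have ptp: "pt n s (qs n) = p" for n
  proof (induction n)
    case 0 then show ?case by (simp add: qs_def)
  next
    case (Suc n) then show ?case by (simp add: pt_Suc qsG[symmetric])
  qed
  have "(\<lambda>n. pt n s (qs n)) \<longlonglongrightarrow> code s" by (rule pt_lim[OF sI qsK K(1)])
  then have "(\<lambda>n. p) \<longlonglongrightarrow> code s" by (simp add: ptp)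
  then have "p = code s" by (rule LIMSEQ_const_iff[THEN iffD1])
  then show "p \<in> Cset" unfolding Cset_def using sI by blast
qed

definition Q0 :: "(real \<times> real) set" where "Q0 = {0..1} \<times> {0..1}"
definition Q :: "nat \<Rightarrow> (real \<times> real) set" where "Q n = (hutch ^^ n) Q0"

lemma hutch_Q0: "hutch Q0 \<subseteq> Q0"
proof (rule subsetI)
  fix p assume "p \<in> hutch Q0"
  then obtain q i where q: "q \<in> Q0" and i: "i \<in> Iset" and p: "p = G q i" unfolding hutch_iff by blast
  have "0 \<le> fst q" "fst q \<le> 1" "0 \<le> snd q" "snd q \<le> 1" using q by (auto simp: Q0_def mem_Times_iff)
  then show "p \<in> Q0" using Iset_bounds[OF i] p by (simp add: Q0_def G_def mem_Times_iff)
qed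

lemma Q_Suc: "Q (Suc n) = hutch (Q n)" by (simp add: Q_def)

lemma Q_dec: "Q (Suc n) \<subseteq> Q n"
proof (induction n)
  case 0 show ?case using hutch_Q0 by (simp add: Q_def)
next
  case (Suc n) then show ?case unfolding Q_Suc[of "Suc n"] Q_Suc[of n] by (rule hutch_mono)
qed

lemma Q_antimono: "m \<le> n \<Longrightarrow> Q n \<subseteq> Q m"
  by (rule lift_Suc_antimono_le[of Q]) (use Q_dec in auto)

lemma Q_compact: "compact (Q n)"
  by (induction n) (auto simp: Q_Suc compact_hutch, simp add: Q_def Q0_def compact_Times)

lemma hutch_ne: "S \<noteq> {} \<Longrightarrow> hutch S \<noteq> {}"
proof -
  assume "S \<noteq> {}"
  then obtain x where x: "x \<in> S" by blast
  have "(1,0) \<in> Iset" by (simp add: Iset_def)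
  then have "G x (1,0) \<in> hutch S" using x hutch_iff by blast
  then show ?thesis by blast
qed

lemma Q_ne: "Q n \<noteq> {}"
  by (induction n) (auto simp: Q_Suc hutch_ne, simp add: Q_def Q0_def)

definition Kst where "Kst = \<Inter>(range Q)"

lemma Kst_compact: "compact Kst"
proof -
  have e: "Kst = Q 0 \<inter> \<Inter>(range Q)" unfolding Kst_def by blast
  have "closed (\<Inter>(range Q))" using Q_compact compact_imp_closed by blast
  from compact_Int_closed[OF Q_compact[of 0] this] show ?thesis unfolding e .
qed

lemma Kst_ne: "Kst \<noteq> {}"
  unfolding Kst_def by (rule compact_nest) (auto simp: Q_compact Q_ne Q_antimono)

lemma Kst_fix: "hutch Kst = Kst"
proof
  show "hutch Kst \<subseteq> Kst"
  proof -
    have "hutch Kst \<subseteq> Q n" for n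
    proof (cases n)
      case 0
      have "hutch Kst \<subseteq> hutch (Q 0)" by (rule hutch_mono) (auto simp: Kst_def)
      also have "\<dots> \<subseteq> Q 0" by (simp add: Q_def hutch_Q0)
      finally show ?thesis using 0 by simp
    next
      case (Suc m)
      have "hutch Kst \<subseteq> hutch (Q m)" by (rule hutch_mono) (auto simp: Kst_def)
      then show ?thesis using Suc by (simp add: Q_Suc)
    qed
    then show ?thesis unfolding Kst_def by blast
  qed
next
  show "Kst \<subseteq> hutch Kst"
  proof
    fix p assume p: "p \<in> Kst"
    have "\<forall>n. \<exists>z. fst z \<in> Q n \<and> snd z \<in> Iset \<and> p = G (fst z) (snd z)"
    proof
      fix n
      have "p \<in> Q (Suc n)" using p by (auto simp: Kst_def)
      then obtain q i where "q \<in> Q n" "i \<in> Iset" "p = G q i" unfolding Q_Suc hutch_iff by blast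
      then show "\<exists>z. fst z \<in> Q n \<and> snd z \<in> Iset \<and> p = G (fst z) (snd z)"
        by (intro exI[of _ "(q, i)"]) simp
    qed
    from choice[OF this] obtain z where z0: "\<forall>n. fst (z n) \<in> Q n \<and> snd (z n) \<in> Iset \<and> p = G (fst (z n)) (snd (z n))"
      by blast
    then have z: "\<And>n. fst (z n) \<in> Q n \<and> snd (z n) \<in> Iset \<and> p = G (fst (z n)) (snd (z n))"
      by blast
    have zin: "\<forall>n. z n \<in> Q 0 \<times> Iset"
    proof
      fix n have "Q n \<subseteq> Q 0" by (rule Q_antimono) simp
      then show "z n \<in> Q 0 \<times> Iset" using z[of n] by (auto simp: mem_Times_iff)
    qed
    have sc: "seq_compact (Q 0 \<times> Iset)"
      by (intro compact_imp_seq_compact compact_Times Q_compact compact_Iset)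
    obtain l r where l: "l \<in> Q 0 \<times> Iset" and r: "strict_mono r" and lim: "(z \<circ> r) \<longlonglongrightarrow> l"
      using seq_compactE[OF sc zin] by blast
    have "fst l \<in> Q N" for N
    proof -
      have "(\<lambda>k. fst (z (r k))) \<longlonglongrightarrow> fst l" using tendsto_fst[OF lim] by (simp add: o_def)
      moreover have "eventually (\<lambda>k. fst (z (r k)) \<in> Q N) sequentially"
      proof (rule eventually_sequentiallyI[of N])
        fix k assume "N \<le> k"
        then have "N \<le> r k" using r seq_suble order_trans by blast
        then have "Q (r k) \<subseteq> Q N" by (rule Q_antimono)
        then show "fst (z (r k)) \<in> Q N" using z[of "r k"] by blast
      qed
      moreover have "closed (Q N)" using Q_compact compact_imp_closed by blast
      ultimately show ?thesis using Lim_in_closed_set[of "Q N" "\<lambda>k. fst (z (r k))" sequentially "fst l"]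
        by simp
    qed
    then have "fst l \<in> Kst" by (auto simp: Kst_def)
    moreover have "p = G (fst l) (snd l)"
    proof -
      have c: "continuous_on UNIV (\<lambda>z. G (fst z) (snd z))" by (rule continuous_G)
      have "(\<lambda>k. G (fst (z (r k))) (snd (z (r k)))) \<longlonglongrightarrow> G (fst l) (snd l)"
        using continuous_on_tendsto_compose[OF c lim] by (simp add: o_def)
      moreover have "(\<lambda>k. G (fst (z (r k))) (snd (z (r k)))) = (\<lambda>k. p)" using z by simp
      ultimately have "(\<lambda>k. p) \<longlonglongrightarrow> G (fst l) (snd l)" by simp
      then show ?thesis by (rule LIMSEQ_const_iff[THEN iffD1])
    qed
    ultimately show "p \<in> hutch Kst" using l hutch_iff by (auto simp: mem_Times_iff)
  qed
qed

lemma Cset_eq_Kst: "Cset = Kst"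
proof
  show "Kst \<subseteq> Cset" by (rule sub_C) (use Kst_compact compact_imp_bounded Kst_fix in auto)
  show "Cset \<subseteq> Kst"
  proof
    fix p assume "p \<in> Cset"
    then obtain s where s: "\<forall>i. s i \<in> Iset" "p = code s" unfolding Cset_def by blast
    obtain q where "q \<in> Kst" using Kst_ne by blast
    then show "p \<in> Kst" using C_sub[of Kst q s] s compact_imp_closed[OF Kst_compact] Kst_fix by simp
  qed
qed

lemma Kset_eq: "Kset = Cset"
  unfolding Kset_def
proof (rule the_equality)
  show "compact Cset \<and> Cset \<noteq> {} \<and> Cset = hutch Cset"
    using Kst_compact Kst_ne Kst_fix Cset_eq_Kst by simp
next
  fix K assume K: "compact K \<and> K \<noteq> {} \<and> K = hutch K"
  show "K = Cset"
  proof
    show "K \<subseteq> Cset" by (rule sub_C) (use K compact_imp_bounded in auto)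
    show "Cset \<subseteq> K"
    proof
      fix p assume "p \<in> Cset"
      then obtain s where s: "\<forall>i. s i \<in> Iset" "p = code s" unfolding Cset_def by blast
      obtain q where "q \<in> K" using K by blast
      then show "p \<in> K" using C_sub[of K q s] s K compact_imp_closed[of K] by simp
    qed
  qed
qed

lemma Kset_compact: "compact Kset" using Kset_eq Cset_eq_Kst Kst_compact by simp



lemma Iset_snd_Ts: "i \<in> Iset \<Longrightarrow> snd i \<in> Ts"
  unfolding Iset_def Ts_def by auto

lemma half_sums: "(\<lambda>i. 1 / 2 ^ Suc i :: real) sums 1"
  using power_half_series by (simp add: power_one_over)

lemma suminf01:
  fixes f :: "nat \<Rightarrow> real"
  assumes "\<And>i. 0 \<le> f i" "\<And>i. f i \<le> 1"
  shows "0 \<le> (\<Sum>i. f i / 2 ^ Suc i) \<and> (\<Sum>i. f i / 2 ^ Suc i) \<le> 1"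
proof
  have s: "summable (\<lambda>i. f i / 2 ^ Suc i)" by (rule summ01) (use assms in auto)
  show "0 \<le> (\<Sum>i. f i / 2 ^ Suc i)" by (rule suminf_nonneg[OF s]) (use assms in auto)
  have "(\<Sum>i. f i / 2 ^ Suc i) \<le> (\<Sum>i. 1 / 2 ^ Suc i)"
    by (rule suminf_le[OF _ s]) (use assms half_sums sums_summable in \<open>auto simp: divide_right_mono\<close>)
  then show "(\<Sum>i. f i / 2 ^ Suc i) \<le> 1" using half_sums sums_unique by fastforce
qed

lemma code_bounds:
  assumes "\<forall>i. s i \<in> Iset"
  shows "0 \<le> fst (code s) \<and> fst (code s) \<le> 1 \<and> 0 \<le> snd (code s) \<and> snd (code s) \<le> 1"
  using suminf01[of "\<lambda>i. snd (s i)"] suminf01[of "\<lambda>i. fst (s i)"] Iset_bounds assms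
  unfolding code_def by auto

lemma suminf_shift:
  fixes f :: "nat \<Rightarrow> real"
  assumes "\<And>i. 0 \<le> f i" "\<And>i. f i \<le> 1"
  shows "(\<Sum>i. f i / 2 ^ Suc i) = (\<Sum>i<k. f i / 2 ^ Suc i) + (\<Sum>i. f (i + k) / 2 ^ Suc i) / 2 ^ k"
proof -
  have s: "summable (\<lambda>i. f i / 2 ^ Suc i)" by (rule summ01) (use assms in auto)
  have s2: "summable (\<lambda>i. f (i + k) / 2 ^ Suc i)" by (rule summ01) (use assms in auto)
  have e: "(\<lambda>n. f (n + k) / 2 ^ Suc (n + k)) = (\<lambda>n. f (n + k) / 2 ^ Suc n / 2 ^ k)"
    by (simp add: power_add mult.assoc)
  show ?thesis
    using suminf_split_initial_segment[OF s, of k] unfolding e suminf_divide[OF s2] by simp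
qed

lemma code_split:
  assumes s: "\<forall>i. s i \<in> Iset"
  shows "code s = pt k s (code (\<lambda>i. s (i + k)))"
  using suminf_shift[of "\<lambda>i. snd (s i)" k] suminf_shift[of "\<lambda>i. fst (s i)" k] Iset_bounds s
  unfolding code_def pt_def by auto

definition py :: "(nat \<Rightarrow> real \<times> real) \<Rightarrow> nat \<Rightarrow> real" where
  "py s k = (\<Sum>i<k. fst (s i) / 2 ^ Suc i)"
definition px :: "(nat \<Rightarrow> real \<times> real) \<Rightarrow> nat \<Rightarrow> real" where
  "px s k = (\<Sum>i<k. snd (s i) / 2 ^ Suc i)"

lemma py_int: "\<forall>i. s i \<in> Iset \<Longrightarrow> py s k * 2 ^ k \<in> \<int>"
proof (induction k)
  case 0 then show ?case by (simp add: py_def)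
next
  case (Suc k)
  have "py s (Suc k) * 2 ^ Suc k = 2 * (py s k * 2 ^ k) + fst (s k)"
    by (simp add: py_def field_simps sum_distrib_right)
  moreover have "fst (s k) \<in> \<int>" using Iset_cases[of "s k"] Suc.prems by auto
  ultimately show ?case using Suc by simp
qed

lemma prefix_y:
  fixes A :: int
  assumes s: "\<forall>i. s i \<in> Iset"
    and lo: "A / 2 ^ k < snd (code s)" and hi: "snd (code s) < (A + 1) / 2 ^ k"
  shows "py s k = A / 2 ^ k"
proof -
  define T where "T = snd (code (\<lambda>i. s (i + k)))"
  have T: "0 \<le> T" "T \<le> 1" using code_bounds[of "\<lambda>i. s (i + k)"] s unfolding T_def by auto
  have y: "snd (code s) = py s k + T / 2 ^ k"
    using arg_cong[of _ _ snd, OF code_split[OF s, of k]] unfolding T_def pt_def py_def by simp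
  obtain p where p: "py s k * 2 ^ k = of_int p" using py_int[OF s, of k] Ints_cases by metis
  have ye: "snd (code s) * 2 ^ k = py s k * 2 ^ k + T" using y by (simp add: field_simps)
  have l2: "A < snd (code s) * 2 ^ k" using lo by (simp add: pos_divide_less_eq)
  have h2: "snd (code s) * 2 ^ k < A + 1" using hi by (simp add: pos_less_divide_eq)
  have "A < p + 1" using p T ye l2 by linarith
  moreover have "p < A + 1" using p T ye h2 by linarith
  ultimately have "p = A" by linarith
  then show ?thesis using p by (simp add: field_simps)
qed

lemma geom_block: "(\<Sum>i\<in>{m..<m+n}. 1 / 2 ^ Suc i :: real) = 1 / 2 ^ m - 1 / 2 ^ (m + n)"
proof (induction n)
  case 0 then show ?case by simp
next
  case (Suc n)
  have "(\<Sum>i\<in>{m..<m+Suc n}. 1 / 2 ^ Suc i :: real) = (\<Sum>i\<in>{m..<m+n}. 1 / 2 ^ Suc i) + 1 / 2 ^ Suc (m+n)"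
    by simp
  also have "\<dots> = 1 / 2 ^ m - 1 / 2 ^ (m + n) + 1 / 2 ^ Suc (m+n)" using Suc by simp
  also have "\<dots> = 1 / 2 ^ m - 1 / 2 ^ (m + Suc n)"
  proof -
    have "1 / 2 ^ (m + n) = 2 * (1 / 2 ^ Suc (m + n) :: real)" by simp
    then show ?thesis by simp
  qed
  finally show ?case .
qed

lemma sum_split_mid:
  fixes g :: "nat \<Rightarrow> real"
  shows "(\<Sum>i<m+n. g i) = (\<Sum>i<m. g i) + (\<Sum>i\<in>{m..<m+n}. g i)"
  using sum.atLeastLessThan_concat[of 0 m "m+n" g] by (simp add: atLeast0LessThan)

fun Xs :: "nat \<Rightarrow> real set" where
  "Xs 0 = {0}"
| "Xs (Suc m) = (\<lambda>z. fst z + snd z / 2 ^ Suc m) ` (Xs m \<times> Ts)"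

lemma px_in: "\<forall>i. s i \<in> Iset \<Longrightarrow> px s m \<in> Xs m"
proof (induction m)
  case 0 then show ?case by (simp add: px_def)
next
  case (Suc m)
  have "px s (Suc m) = fst (px s m, snd (s m)) + snd (px s m, snd (s m)) / 2 ^ Suc m"
    by (simp add: px_def)
  moreover have "(px s m, snd (s m)) \<in> Xs m \<times> Ts" using Suc Iset_snd_Ts by auto
  ultimately show ?case
    using rev_image_eqI[of "(px s m, snd (s m))" "Xs m \<times> Ts" "px s (Suc m)" "\<lambda>z. fst z + snd z / 2 ^ Suc m"]
    by simp
qed

lemma Xs_compact: "compact (Xs m)"
proof (induction m)
  case 0 then show ?case by simp
next
  case (Suc m)
  have "continuous_on (Xs m \<times> Ts) (\<lambda>z. fst z + snd z / 2 ^ Suc m :: real)"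
    by (intro continuous_intros) auto
  then show ?case using Suc by (simp only: Xs.simps) (intro compact_continuous_image compact_Times compact_Ts)
qed

lemma Ts_countable: "countable Ts"
  unfolding Ts_def by simp

lemma Xs_countable: "countable (Xs m)"
  by (induction m) (auto simp: Ts_countable)

lemma fiber_trap:
  fixes j :: int
  assumes s: "\<forall>i. s i \<in> Iset"
    and y1: "j < snd (code s) * 2 ^ m" "snd (code s) * 2 ^ m < j + 1"
    and y2: "snd (code s) * 2 ^ (m + n) = j * 2 ^ n + 2 ^ n - 1/2"
  shows "\<exists>a\<in>Xs m. a \<le> fst (code s) \<and> fst (code s) \<le> a + 1 / 2 ^ (m + n)"
proof -
  have pm: "py s m = j / 2 ^ m"
    by (rule prefix_y[OF s]) (use y1 in \<open>simp_all add: pos_divide_less_eq pos_less_divide_eq\<close>)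
  define A :: int where "A = j * 2 ^ n + 2 ^ n - 1"
  have pk: "py s (m + n) = A / 2 ^ (m + n)"
    by (rule prefix_y[OF s]) (use y2 in \<open>simp_all add: pos_divide_less_eq pos_less_divide_eq A_def\<close>)
  have "(\<Sum>i\<in>{m..<m+n}. fst (s i) / 2 ^ Suc i) = py s (m + n) - py s m"
    unfolding py_def using sum_split_mid[of "\<lambda>i. fst (s i) / 2 ^ Suc i" m n] by simp
  also have "\<dots> = A / 2 ^ (m + n) - j / 2 ^ m" using pm pk by simp
  also have "\<dots> = 1 / 2 ^ m - 1 / 2 ^ (m + n)"
    by (simp add: A_def field_simps power_add)
  also have "\<dots> = (\<Sum>i\<in>{m..<m+n}. 1 / 2 ^ Suc i)" by (rule geom_block[symmetric])
  finally have "(\<Sum>i\<in>{m..<m+n}. 1 / 2 ^ Suc i - fst (s i) / 2 ^ Suc i) = 0"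
    by (simp add: sum_subtractf)
  moreover have nn: "\<And>i. i \<in> {m..<m+n} \<Longrightarrow> 0 \<le> 1 / 2 ^ Suc i - fst (s i) / 2 ^ Suc i"
  proof -
    fix i
    have "fst (s i) \<le> 1" using Iset_bounds s by blast
    then have "0 \<le> (1 - fst (s i)) / 2 ^ Suc i" by simp
    then show "0 \<le> 1 / 2 ^ Suc i - fst (s i) / 2 ^ Suc i" by (simp add: diff_divide_distrib)
  qed
  ultimately have z: "\<forall>i\<in>{m..<m+n}. 1 / 2 ^ Suc i - fst (s i) / 2 ^ Suc i = 0"
    using sum_nonneg_eq_0_iff[OF finite_atLeastLessThan nn] by simp
  have one: "\<forall>i\<in>{m..<m+n}. fst (s i) = 1"
  proof
    fix i assume "i \<in> {m..<m+n}"
    then have "1 / 2 ^ Suc i - fst (s i) / 2 ^ Suc i = 0" using z by blast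
    then show "fst (s i) = 1" by (simp add: diff_divide_distrib[symmetric])
  qed
  have zero: "\<forall>i\<in>{m..<m+n}. snd (s i) = 0"
  proof
    fix i assume "i \<in> {m..<m+n}"
    then show "snd (s i) = 0" using one Iset_cases[of "s i"] s by simp
  qed
  have pxe: "px s (m + n) = px s m"
    unfolding px_def using sum_split_mid[of "\<lambda>i. snd (s i) / 2 ^ Suc i" m n] zero by simp
  define X where "X = fst (code (\<lambda>i. s (i + (m + n))))"
  have X: "0 \<le> X" "X \<le> 1" using code_bounds[of "\<lambda>i. s (i + (m+n))"] s unfolding X_def by auto
  have x: "fst (code s) = px s m + X / 2 ^ (m + n)"
    using arg_cong[of _ _ fst, OF code_split[OF s, of "m + n"]] pxe unfolding X_def pt_def px_def by simp
  have "X / 2 ^ (m + n) \<le> 1 / 2 ^ (m + n)" using X by (simp add: divide_right_mono)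
  moreover have "0 \<le> X / 2 ^ (m + n)" using X by simp
  ultimately show ?thesis using x px_in[OF s, of m] by (intro bexI[of _ "px s m"]) auto
qed



lemma interior_Cset: "interior Cset = {}"
proof (rule ccontr)
  assume "interior Cset \<noteq> {}"
  then obtain z where "z \<in> interior Cset" by blast
  then obtain e where e: "e > 0" "ball z e \<subseteq> Cset" using mem_interior by blast
  obtain m where m: "(1/2::real) ^ m < e / 2" using real_arch_pow_inv[of "e/2" "1/2"] e by auto
  have m': "1 / 2 ^ m < e / 2" using m by (simp add: power_one_over)
  define x0 where "x0 = fst z"
  define y0 where "y0 = snd z"
  define j where "j = \<lfloor>y0 * 2 ^ m\<rfloor>"
  have j: "j \<le> y0 * 2 ^ m" "y0 * 2 ^ m < j + 1" unfolding j_def by linarith+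
  have sub: "{x0 - e/2<..<x0 + e/2} \<subseteq> Xs m"
  proof
    fix x assume x: "x \<in> {x0 - e/2<..<x0 + e/2}"
    have "\<forall>n. \<exists>a\<in>Xs m. a \<le> x \<and> x \<le> a + 1 / 2 ^ (m + n)"
    proof
      fix n
      define y where "y = (j + 1 - 1 / 2 ^ Suc n) / 2 ^ m"
      have p1: "(1::real) \<le> 2 ^ n" by simp
      have "1 < 2 * (2::real) ^ n" using p1 by linarith
      then have hpos: "0 < 1 / (2::real) ^ Suc n" "1 / (2::real) ^ Suc n < 1"
        by simp_all
      have ym: "y * 2 ^ m = j + 1 - 1 / 2 ^ Suc n" unfolding y_def by simp
      have y1: "j < y * 2 ^ m" "y * 2 ^ m < j + 1" using ym hpos by linarith+
      have y2: "y * 2 ^ (m + n) = j * 2 ^ n + 2 ^ n - 1/2"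
      proof -
        have "y * 2 ^ (m + n) = (y * 2 ^ m) * 2 ^ n" by (simp add: power_add)
        also have "\<dots> = j * 2 ^ n + 2 ^ n - (1 / 2 ^ Suc n) * 2 ^ n" unfolding ym by (simp add: algebra_simps)
        also have "(1 / 2 ^ Suc n) * 2 ^ n = (1/2 :: real)" by simp
        finally show ?thesis .
      qed
      have "\<bar>y * 2 ^ m - y0 * 2 ^ m\<bar> < 1" using y1 j by linarith
      then have "\<bar>y - y0\<bar> * 2 ^ m < 1" by (simp add: left_diff_distrib[symmetric] abs_mult)
      then have dy: "\<bar>y - y0\<bar> < 1 / 2 ^ m" by (simp add: pos_less_divide_eq)
      have xa: "x0 - e/2 < x" "x < x0 + e/2" using x by auto
      then have dx: "\<bar>x - x0\<bar> < e / 2" by arith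
      have "dist (x, y) z = sqrt ((dist x x0)\<^sup>2 + (dist y y0)\<^sup>2)"
        unfolding x0_def y0_def using dist_Pair_Pair[of x y "fst z" "snd z"] by simp
      also have "\<dots> \<le> \<bar>dist x x0\<bar> + \<bar>dist y y0\<bar>" by (rule sqrt_sum_squares_le_sum_abs)
      also have "\<dots> < e" using dx dy m' by (simp add: dist_real_def)
      finally have "(x, y) \<in> Cset" using e(2) by (auto simp: dist_commute)
      then obtain s where s: "\<forall>i. s i \<in> Iset" "(x, y) = code s" unfolding Cset_def by blast
      have "snd (code s) = y" "fst (code s) = x" using s(2) by (metis snd_conv, metis fst_conv)
      then show "\<exists>a\<in>Xs m. a \<le> x \<and> x \<le> a + 1 / 2 ^ (m + n)"
        using fiber_trap[OF s(1), of j m n] y1 y2 by simp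
    qed
    then obtain a where a: "\<And>n. a n \<in> Xs m" "\<And>n. a n \<le> x" "\<And>n. x \<le> a n + 1 / 2 ^ (m + n)"
      by metis
    have lim: "a \<longlonglongrightarrow> x"
    proof -
      have "(\<lambda>n. x - a n) \<longlonglongrightarrow> 0"
      proof (rule Lim_null_comparison[of _ "\<lambda>n. (1/2::real) ^ n"])
        show "\<forall>\<^sub>F n in sequentially. norm (x - a n) \<le> (1 / 2) ^ n"
        proof (rule always_eventually, rule allI)
          fix n
          have "(2::real) ^ n \<le> 2 ^ (m + n)" by (rule power_increasing) auto
          then have "1 / (2::real) ^ (m + n) \<le> 1 / 2 ^ n" by (intro divide_left_mono) auto
          then show "norm (x - a n) \<le> (1 / 2) ^ n" using a(2,3)[of n] by (simp add: power_one_over)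
        qed
        show "(\<lambda>n. (1/2::real) ^ n) \<longlonglongrightarrow> 0" by (rule LIMSEQ_realpow_zero) auto
      qed
      then have "(\<lambda>n. x - (x - a n)) \<longlonglongrightarrow> x - 0" by (intro tendsto_diff tendsto_const)
      then show ?thesis by simp
    qed
    show "x \<in> Xs m" by (rule closed_sequentially[of "Xs m" a x, OF compact_imp_closed[OF Xs_compact] a(1) lim])
  qed
  have "countable {x0 - e/2<..<x0 + e/2}" using countable_subset[OF sub Xs_countable] .
  moreover have "x0 - e/2 < x0 + e/2" using e by simp
  ultimately show False using uncountable_open_interval by blast
qed



definition eps :: "real \<Rightarrow> real" where "eps t = (if t < 1/2 then 0 else 1)"
definition sh :: "real \<Rightarrow> real" where "sh t = 2 * t - eps t"
definition cf :: "real \<Rightarrow> real" where "cf t = (if t < 1/2 then 1/2 else 1)"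

fun W :: "nat \<Rightarrow> real \<Rightarrow> real" where
  "W 0 t = 1"
| "W (Suc n) t = cf t * W n (sh t)"

definition H :: "real \<Rightarrow> real" where "H t = (\<Sum>n. W n t)"
definition sg :: "real \<Rightarrow> real" where "sg t = 2 powr (-1 - H t)"

lemma cf_pos: "0 < cf t" by (simp add: cf_def)

lemma W_pos: "0 < W n t"
  by (induction n arbitrary: t) (auto simp: cf_pos)

lemma sh_range: "0 \<le> t \<Longrightarrow> t < 1 \<Longrightarrow> 0 \<le> sh t \<and> sh t < 1"
  by (auto simp: sh_def eps_def)

lemma summable_sh:
  assumes "summable (\<lambda>n. W n t)"
  shows "summable (\<lambda>n. W n (sh t))"
proof -
  have "summable (\<lambda>n. W (n + 1) t)" using assms summable_iff_shift[of "\<lambda>n. W n t" 1] by blast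
  then have "summable (\<lambda>n. W (n + 1) t / cf t)" by (rule summable_divide)
  moreover have "(\<lambda>n. W (n + 1) t / cf t) = (\<lambda>n. W n (sh t))"
    using cf_pos[of t] by auto
  ultimately show ?thesis by simp
qed

lemma H_rec:
  assumes "summable (\<lambda>n. W n t)"
  shows "H t = 1 + cf t * H (sh t)"
proof -
  have "(\<Sum>n. W (Suc n) t) = H t - W 0 t" unfolding H_def by (rule suminf_split_head[OF assms])
  moreover have "(\<Sum>n. W (Suc n) t) = cf t * H (sh t)"
    unfolding H_def W.simps by (rule suminf_mult[OF summable_sh[OF assms]])
  ultimately show ?thesis by simp
qed

lemma H_nonneg: "summable (\<lambda>n. W n t) \<Longrightarrow> 0 \<le> H t"
  unfolding H_def by (rule suminf_nonneg) (auto intro: less_imp_le W_pos)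

lemma H_ge1: "summable (\<lambda>n. W n t) \<Longrightarrow> 1 \<le> H t"
  using H_rec[of t] H_nonneg[OF summable_sh, of t] cf_pos[of t] by simp

lemma sg_pos: "0 < sg t" by (simp add: sg_def)

lemma sg_le: "summable (\<lambda>n. W n t) \<Longrightarrow> sg t \<le> 1"
proof -
  assume a: "summable (\<lambda>n. W n t)"
  have "sg t \<le> 2 powr 0" unfolding sg_def by (rule powr_mono) (use H_nonneg[OF a] in auto)
  then show ?thesis by simp
qed

lemma pick_ex:
  fixes u U s' :: real
  assumes u0: "0 \<le> u" and uU: "u \<le> U" and U1: "U \<le> 1" and Us: "2 * U ^ 2 \<le> s'" and s0: "0 < s'"
  shows "\<exists>\<tau>\<in>Ts. 0 \<le> u - \<tau> \<and> u - \<tau> \<le> s'"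
proof (cases "u \<le> s'")
  case True
  then show ?thesis using u0 by (intro bexI[of _ 0]) (auto simp: Ts_def)
next
  case False
  then have up: "0 < u" using s0 by linarith
  have u1: "u \<le> 1" using uU U1 by linarith
  define M where "M = nat \<lceil>1 / u\<rceil>"
  have iu: "1 \<le> 1 / u" using up u1 by simp
  have cc: "0 \<le> \<lceil>1 / u\<rceil>" using iu by (simp add: ceiling_le_zero)
  have rM: "real M = of_int \<lceil>1 / u\<rceil>" unfolding M_def using cc by simp
  have M1: "1 / u \<le> real M" unfolding rM using ceiling_correct[of "1/u"] by linarith
  have M2: "real M < 1 / u + 1" unfolding rM using ceiling_correct[of "1/u"] by linarith
  have Mge: "1 \<le> real M" using iu M1 by linarith
  have "u * (1 / u) \<le> u * real M" by (rule mult_left_mono[OF M1]) (use up in auto)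
  then have um1: "1 \<le> u * real M" using up by simp
  have "u * real M < u * (1 / u + 1)" by (rule mult_strict_left_mono[OF M2 up])
  then have um2: "u * real M < 1 + u" using up by (simp add: distrib_left)
  have tauTs: "1 / real M \<in> Ts"
  proof -
    have "M \<ge> 1" using Mge by linarith
    then have "M = Suc (M - 1)" by simp
    then have "1 / real M = 1 / real (Suc (M - 1))" by metis
    then show ?thesis unfolding Ts_def by blast
  qed
  have t_le: "1 / real M \<le> u" using um1 Mge by (simp add: divide_le_eq mult.commute)
  have "u - 1 / real M = (u * real M - 1) / real M" using Mge by (simp add: field_simps)
  also have "\<dots> \<le> u / real M" using um2 Mge by (intro divide_right_mono) auto
  also have "\<dots> = u * (1 / real M)" by simp
  also have "\<dots> \<le> u * u" using t_le up by (intro mult_left_mono) auto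
  also have "\<dots> \<le> U * U" using u0 uU by (intro mult_mono) auto
  also have "\<dots> \<le> s'"
  proof -
    have "0 \<le> U * U" by simp
    then show ?thesis using Us unfolding power2_eq_square by linarith
  qed
  finally have "u - 1 / real M \<le> s'" .
  then show ?thesis using t_le tauTs by (intro bexI[of _ "1 / real M"]) auto
qed

definition Inv :: "real \<times> real \<Rightarrow> bool" where
  "Inv z \<longleftrightarrow> 0 \<le> snd z \<and> snd z < 1 \<and> summable (\<lambda>n. W n (snd z)) \<and> 0 \<le> fst z \<and> fst z \<le> sg (snd z)"

definition pk :: "real \<times> real \<Rightarrow> real" where
  "pk z = (if snd z < 1/2 then (SOME \<tau>. \<tau> \<in> Ts \<and> 0 \<le> 2 * fst z - \<tau> \<and> 2 * fst z - \<tau> \<le> sg (sh (snd z))) else 0)"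

definition step :: "real \<times> real \<Rightarrow> real \<times> real" where
  "step z = (2 * fst z - pk z, sh (snd z))"

lemma two_powr: "2 * 2 powr (a::real) = 2 powr (a + 1)"
  using powr_add[of "2::real" a 1] by simp

lemma powr_sq: "2 * (2 powr (- h :: real)) ^ 2 = 2 powr (1 - 2 * h)"
proof -
  have "(2 powr (- h :: real)) ^ 2 = 2 powr (- h) * 2 powr (- h)" by (simp add: power2_eq_square)
  also have "\<dots> = 2 powr (- 2 * h)" by (simp add: powr_add[symmetric])
  moreover have "2 powr (1 - 2 * h) = 2 powr 1 * 2 powr (- 2 * h :: real)"
    using powr_add[of "2::real" 1 "- 2 * h"] by simp
  ultimately show ?thesis by simp
qed

lemma step_ok:
  assumes I: "Inv z"
  shows "Inv (step z) \<and> (eps (snd z), pk z) \<in> Iset \<and> z = G (step z) (eps (snd z), pk z)"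
proof -
  obtain R t where z: "z = (R, t)" by (cases z)
  have t0: "0 \<le> t" and t1: "t < 1" and sm: "summable (\<lambda>n. W n t)" and R0: "0 \<le> R" and Rs: "R \<le> sg t"
    using I unfolding Inv_def z by auto
  have sm': "summable (\<lambda>n. W n (sh t))" by (rule summable_sh[OF sm])
  have shr: "0 \<le> sh t" "sh t < 1" using sh_range[OF t0 t1] by auto
  define h where "h = H t"
  have hrec: "h = 1 + cf t * H (sh t)" unfolding h_def by (rule H_rec[OF sm])
  have h1: "1 \<le> h" unfolding h_def by (rule H_ge1[OF sm])
  show ?thesis
  proof (cases "t < 1/2")
    case True
    have Hs: "H (sh t) = 2 * h - 2" using hrec True by (simp add: cf_def)
    have sgs: "sg (sh t) = 2 powr (1 - 2 * h)" unfolding sg_def Hs by (simp add: algebra_simps)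
    define U where "U = 2 powr (- h)"
    have sgt: "2 * sg t = U" unfolding sg_def U_def h_def[symmetric]
      using two_powr[of "- 1 - h"] by simp
    have U1: "U \<le> 1"
    proof -
      have "U \<le> 2 powr 0" unfolding U_def by (rule powr_mono) (use h1 in auto)
      then show ?thesis by simp
    qed
    have ex: "\<exists>\<tau>\<in>Ts. 0 \<le> 2 * R - \<tau> \<and> 2 * R - \<tau> \<le> sg (sh t)"
    proof (rule pick_ex[of "2 * R" U "sg (sh t)"])
      show "0 \<le> 2 * R" using R0 by simp
      show "2 * R \<le> U" using Rs sgt by linarith
      show "U \<le> 1" by (rule U1)
      show "2 * U\<^sup>2 \<le> sg (sh t)" using powr_sq[of h] sgs unfolding U_def by simp
      show "0 < sg (sh t)" by (rule sg_pos)
    qed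
    then have ex2: "\<exists>\<tau>. \<tau> \<in> Ts \<and> 0 \<le> 2 * R - \<tau> \<and> 2 * R - \<tau> \<le> sg (sh t)" by blast
    have pkz: "pk z = (SOME \<tau>. \<tau> \<in> Ts \<and> 0 \<le> 2 * R - \<tau> \<and> 2 * R - \<tau> \<le> sg (sh t))"
      unfolding pk_def z using True by simp
    have P: "pk z \<in> Ts \<and> 0 \<le> 2 * R - pk z \<and> 2 * R - pk z \<le> sg (sh t)"
      unfolding pkz by (rule someI_ex[OF ex2])
    have eps0: "eps t = 0" using True by (simp add: eps_def)
    have "Inv (step z)" unfolding Inv_def step_def z using shr sm' P by (simp add: z)
    moreover have "(eps (snd z), pk z) \<in> Iset" using P eps0 z by (simp add: Iset_def)
    moreover have "z = G (step z) (eps (snd z), pk z)"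
      using eps0 by (simp add: z step_def G_def sh_def)
    ultimately show ?thesis by blast
  next
    case False
    have Hs: "H (sh t) = h - 1" using hrec False by (simp add: cf_def)
    have sgs: "sg (sh t) = 2 * sg t" unfolding sg_def Hs h_def
      using two_powr[of "- 1 - H t"] by simp
    have pk0: "pk z = 0" using False by (simp add: pk_def z)
    have eps1: "eps t = 1" using False by (simp add: eps_def)
    have "Inv (step z)" unfolding Inv_def step_def using shr sm' pk0 R0 Rs sgs by (simp add: z)
    moreover have "(eps (snd z), pk z) \<in> Iset" using pk0 eps1 z by (simp add: Iset_def)
    moreover have "z = G (step z) (eps (snd z), pk z)"
      using eps1 pk0 by (simp add: z step_def G_def sh_def)
    ultimately show ?thesis by blast
  qed
qed

lemma fibre_in:
  assumes "0 \<le> y" "y < 1" "summable (\<lambda>n. W n y)" "0 \<le> x" "x \<le> sg y"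
  shows "(x, y) \<in> Cset"
proof -
  define zs where "zs = (\<lambda>n. (step ^^ n) (x, y))"
  have zsS: "zs (Suc n) = step (zs n)" for n by (simp add: zs_def)
  have inv: "Inv (zs n)" for n
  proof (induction n)
    case 0 then show ?case using assms by (simp add: zs_def Inv_def)
  next
    case (Suc n) then show ?case using step_ok[of "zs n"] by (simp add: zsS)
  qed
  define s where "s = (\<lambda>n. (eps (snd (zs n)), pk (zs n)))"
  have sI: "\<forall>n. s n \<in> Iset" using step_ok inv unfolding s_def by blast
  have zsG: "zs n = G (zs (Suc n)) (s n)" for n using step_ok[OF inv[of n]] by (simp add: zsS s_def)
  have ptp: "pt n s (zs n) = (x, y)" for n
  proof (induction n)
    case 0 then show ?case by (simp add: zs_def)
  next
    case (Suc n) then show ?case by (simp add: pt_Suc zsG[symmetric])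
  qed
  have zB: "zs n \<in> {0..1} \<times> {0..1}" for n
    using inv[of n] sg_le[of "snd (zs n)"] unfolding Inv_def by (auto simp: mem_Times_iff)
  have bB: "bounded ({0..1::real} \<times> {0..1::real})" by (intro bounded_Times) auto
  have "(\<lambda>n. pt n s (zs n)) \<longlonglongrightarrow> code s" by (rule pt_lim[OF sI zB bB])
  then have "(\<lambda>n. (x, y)) \<longlonglongrightarrow> code s" by (simp add: ptp)
  then have "(x, y) = code s" by (rule LIMSEQ_const_iff[THEN iffD1])
  then show ?thesis unfolding Cset_def using sI by blast
qed



lemma sh_meas[measurable]: "sh \<in> borel_measurable borel"
  unfolding sh_def eps_def by measurable

lemma cf_meas[measurable]: "cf \<in> borel_measurable borel"
  unfolding cf_def by measurable

lemma W_meas[measurable]: "W n \<in> borel_measurable borel"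
proof (induction n)
  case 0
  have "W 0 = (\<lambda>t. 1)" by (rule ext) simp
  then show ?case by simp
next
  case (Suc n)
  have e: "W (Suc n) = (\<lambda>t. cf t * W n (sh t))" by (rule ext) simp
  have "(\<lambda>t. W n (sh t)) \<in> borel_measurable borel" by (rule measurable_compose[OF sh_meas Suc.IH])
  then show ?case unfolding e by (intro borel_measurable_times cf_meas)
qed

definition II :: "nat \<Rightarrow> ennreal" where
  "II n = (\<integral>\<^sup>+ t. ennreal (W n t) * indicator {0..<1} t \<partial>lborel)"

lemma affine1: "(\<integral>\<^sup>+ t. ennreal (W n (2 * t)) * indicator {0..<1/2} t \<partial>lborel) * 2 = II n"
proof -
  have "II n = ennreal \<bar>2\<bar> * (\<integral>\<^sup>+ x. ennreal (W n (0 + 2 * x)) * indicator {0..<1} (0 + 2 * x) \<partial>lborel)"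
    unfolding II_def by (rule nn_integral_real_affine) auto
  moreover have "(\<lambda>x. ennreal (W n (0 + 2 * x)) * indicator {0..<1} (0 + 2 * x)) =
                 (\<lambda>x. ennreal (W n (2 * x)) * indicator {0..<1/2} x)"
    by (rule ext) (auto simp: indicator_def)
  ultimately show ?thesis by (simp add: mult.commute)
qed

lemma affine2: "(\<integral>\<^sup>+ t. ennreal (W n (2 * t - 1)) * indicator {1/2..<1} t \<partial>lborel) * 2 = II n"
proof -
  have "II n = ennreal \<bar>2\<bar> * (\<integral>\<^sup>+ x. ennreal (W n (-1 + 2 * x)) * indicator {0..<1} (-1 + 2 * x) \<partial>lborel)"
    unfolding II_def by (rule nn_integral_real_affine) auto
  moreover have "(\<lambda>x. ennreal (W n (-1 + 2 * x)) * indicator {0..<1} (-1 + 2 * x)) =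
                 (\<lambda>x. ennreal (W n (2 * x - 1)) * indicator {1/2..<1} x)"
    by (rule ext) (auto simp: indicator_def)
  ultimately show ?thesis by (simp add: mult.commute)
qed

lemma split_pt:
  "ennreal (W (Suc n) t) * indicator {0..<1} t =
   ennreal (1/2) * (ennreal (W n (2 * t)) * indicator {0..<1/2} t) +
   ennreal (W n (2 * t - 1)) * indicator {1/2..<1} t"
proof (cases "t < 1/2")
  case True
  have m: "ennreal (1/2) * ennreal (W n (2 * t)) = ennreal (1/2 * W n (2 * t))"
    by (rule ennreal_mult[symmetric]) (auto simp: W_pos less_imp_le)
  show ?thesis
  proof (cases "0 \<le> t")
    case True2: True
    have "ennreal (W (Suc n) t) = ennreal (1/2 * W n (2 * t))"
      using True by (simp add: cf_def sh_def eps_def)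
    then show ?thesis using True True2 m by (simp add: indicator_def)
  next
    case False
    then show ?thesis using True by (simp add: indicator_def)
  qed
next
  case False
  then show ?thesis
    by (auto simp: indicator_def cf_def sh_def eps_def)
qed

lemma half_of: "x * 2 = ennreal q \<Longrightarrow> 0 \<le> q \<Longrightarrow> x = ennreal (q / 2)"
proof -
  assume a: "x * 2 = ennreal q" "0 \<le> q"
  have "ennreal 2 * ennreal (1/2) = ennreal (2 * (1/2))" by (rule ennreal_mult[symmetric]) auto
  then have h: "(2::ennreal) * ennreal (1/2) = 1" by simp
  have "x = x * (2 * ennreal (1/2))" by (simp only: h mult_1_right)
  also have "\<dots> = ennreal q * ennreal (1/2)" using a(1) by (simp only: mult.assoc[symmetric])
  also have "\<dots> = ennreal (q * (1/2))" by (rule ennreal_mult[symmetric]) (use a(2) in auto)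
  finally show ?thesis by simp
qed

lemma II_eq: "II n = ennreal ((3/4) ^ n)"
proof (induction n)
  case 0
  have "II 0 = (\<integral>\<^sup>+ t. indicator {0..<1::real} t \<partial>lborel)" unfolding II_def by (simp only: W.simps ennreal_1 mult_1)
  also have "\<dots> = emeasure lborel {0..<1::real}" by (rule nn_integral_indicator) simp
  finally show ?case by simp
next
  case (Suc n)
  define A where "A = (\<integral>\<^sup>+ t. ennreal (W n (2 * t)) * indicator {0..<1/2} t \<partial>lborel)"
  define B where "B = (\<integral>\<^sup>+ t. ennreal (W n (2 * t - 1)) * indicator {1/2..<1} t \<partial>lborel)"
  have A: "A = ennreal ((3/4) ^ n / 2)" using affine1[of n] Suc by (intro half_of) (auto simp: A_def)
  have B: "B = ennreal ((3/4) ^ n / 2)" using affine2[of n] Suc by (intro half_of) (auto simp: B_def)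
  have "II (Suc n) = (\<integral>\<^sup>+ t. ennreal (1/2) * (ennreal (W n (2 * t)) * indicator {0..<1/2} t) +
                 ennreal (W n (2 * t - 1)) * indicator {1/2..<1} t \<partial>lborel)"
    unfolding II_def split_pt ..
  also have "\<dots> = (\<integral>\<^sup>+ t. ennreal (1/2) * (ennreal (W n (2 * t)) * indicator {0..<1/2} t) \<partial>lborel) + B"
    unfolding B_def by (rule nn_integral_add) auto
  also have "(\<integral>\<^sup>+ t. ennreal (1/2) * (ennreal (W n (2 * t)) * indicator {0..<1/2} t) \<partial>lborel) = ennreal (1/2) * A"
    unfolding A_def by (rule nn_integral_cmult) auto
  finally have "II (Suc n) = ennreal (1/2) * ennreal ((3/4) ^ n / 2) + ennreal ((3/4) ^ n / 2)"
    using A B by simp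
  also have "\<dots> = ennreal (1/2 * ((3/4) ^ n / 2)) + ennreal ((3/4) ^ n / 2)"
    by (subst ennreal_mult[symmetric]) auto
  also have "\<dots> = ennreal (1/2 * ((3/4) ^ n / 2) + (3/4) ^ n / 2)"
    by (rule ennreal_plus[symmetric]) auto
  also have "1/2 * ((3/4) ^ n / 2) + (3/4) ^ n / 2 = ((3/4::real) ^ Suc n)"
    by simp
  finally show ?case .
qed

lemma AE_summable: "AE y in lborel. y \<in> {0..<1} \<longrightarrow> summable (\<lambda>n. W n y)"
proof -
  define g where "g y = (\<Sum>n. ennreal (W n y) * indicator {0..<1} y)" for y :: real
  have gm: "g \<in> borel_measurable lborel" unfolding g_def by measurable
  have "integral\<^sup>N lborel g = (\<Sum>n. II n)"
    unfolding g_def II_def by (rule nn_integral_suminf) measurable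
  also have "\<dots> = (\<Sum>n. ennreal ((3/4) ^ n))" by (simp add: II_eq)
  also have "\<dots> = ennreal (1 / (1 - 3/4))"
    by (rule suminf_ennreal_eq) (use geometric_sums[of "3/4::real"] in auto)
  finally have "integral\<^sup>N lborel g \<noteq> \<infinity>" by simp
  from nn_integral_noteq_infinite[OF gm this]
  show ?thesis
  proof (rule AE_mp, intro AE_I2 impI)
    fix y :: real assume gy: "g y \<noteq> \<infinity>" and y: "y \<in> {0..<1}"
    then have "(\<Sum>n. ennreal (W n y)) \<noteq> top" unfolding g_def by simp
    then show "summable (\<lambda>n. W n y)" by (rule summable_suminf_not_top[rotated]) (simp add: less_imp_le W_pos)
  qed
qed



lemma fibre_interval:
  assumes "0 \<le> y" "y < 1" "summable (\<lambda>n. W n y)"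
  shows "{0..sg y} \<subseteq> {x. (x, y) \<in> Kset}"
  using fibre_in[OF assms] Kset_eq by auto

lemma AE_fibre: "AE y in lborel. y \<in> {0..1} \<longrightarrow> (\<exists>a b. a < b \<and> {a..b} \<subseteq> {x. (x, y) \<in> Kset})"
proof -
  have "AE y in lborel. y \<noteq> (1::real)" by (rule AE_lborel_singleton)
  with AE_summable show ?thesis
  proof (eventually_elim)
    case (elim y)
    show ?case
    proof
      assume y: "y \<in> {0..1}"
      then have "y \<in> {0..<1}" using elim by auto
      then have "summable (\<lambda>n. W n y)" "0 \<le> y" "y < 1" using elim by auto
      then show "\<exists>a b. a < b \<and> {a..b} \<subseteq> {x. (x, y) \<in> Kset}"
        using fibre_interval sg_pos by blast
    qed
  qed
qed

lemma Kset_closed: "closed Kset" using Kset_compact compact_imp_closed by blast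

lemma fibre_closed: "closed ((\<lambda>x. (x, y)) -` Kset)"
  by (rule continuous_closed_vimage[OF Kset_closed]) (intro continuous_intros)

lemma measure_pos: "emeasure lborel Kset > 0"
proof -
  have S: "Kset \<in> sets (lborel \<Otimes>\<^sub>M lborel)"
    unfolding lborel_prod using Kset_closed by simp
  have eq: "emeasure lborel Kset = (\<integral>\<^sup>+ y. emeasure lborel ((\<lambda>x. (x, y)) -` Kset) \<partial>lborel)"
    using lborel_pair.emeasure_pair_measure_alt2[OF S] unfolding lborel_prod .
  have meas: "(\<lambda>y. emeasure lborel ((\<lambda>x. (x, y)) -` Kset)) \<in> borel_measurable lborel"
    using lborel_pair.measurable_emeasure_Pair2[OF S] .
  show ?thesis
  proof (rule ccontr)
    assume "\<not> emeasure lborel Kset > 0"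
    then have "emeasure lborel Kset = 0" by (simp add: not_gr_zero)
    then have "AE y in lborel. emeasure lborel ((\<lambda>x. (x, y)) -` Kset) = 0"
      using nn_integral_0_iff_AE[OF meas] eq by simp
    with AE_fibre have "AE y in lborel. y \<notin> {0..1::real}"
    proof (eventually_elim)
      case (elim y)
      show ?case
      proof
        assume "y \<in> {0..1}"
        then obtain a b where ab: "a < b" "{a..b} \<subseteq> {x. (x, y) \<in> Kset}" using elim by blast
        have "{a..b} \<subseteq> (\<lambda>x. (x, y)) -` Kset" using ab by auto
        moreover have "(\<lambda>x. (x, y)) -` Kset \<in> sets lborel" using fibre_closed by simp
        ultimately have "emeasure lborel {a..b} \<le> emeasure lborel ((\<lambda>x. (x, y)) -` Kset)"
          by (rule emeasure_mono)
        then have "ennreal (b - a) \<le> 0" using elim ab by simp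
        then show False using ab by simp
      qed
    qed
    then have "emeasure lborel {0..1::real} = 0"
      by (subst (asm) AE_iff_measurable[of "{0..1}"]) auto
    then show False by simp
  qed
qed

theorem theorem1:
  shows "emeasure lborel Kset > 0
       \<and> interior Kset = {}
       \<and> (AE y in lborel. y \<in> {0..1} \<longrightarrow>
            (\<exists>a b. a < b \<and> {a..b} \<subseteq> {x. (x, y) \<in> Kset}))"
  using measure_pos interior_Cset Kset_eq AE_fibre by simp



end
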